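(* Let $n,m$ be positive integers. For $\lambda\in\mathcal{P}^m_n$ let $\bar\varphi_n(\lambda)=\{k_{i,j}(\lambda):1\le i\le j\le n\}$, where $$k_{i,j}(\lambda)=\min\left\{m,\left\lceil\frac{\lambda_i-\sum_{\ell=j+1}^n k_{i,\ell}(\lambda)+\sum_{\ell=i+1}^j k_{\ell,j}(\lambda)}{j-i+1}\right\rceil\right\}$$ (defined recursively in order of decreasing $i$, and for fixed $i$ decreasing $j$). Then the image $\bar\varphi_n(\mathcal{P}^m_n)$ is exactly the set of Shi tableaux $\{k_{i,j}(R)\}$ of the dominant regions $R\in\mathcal{R}^m_n$.
   Context: $\mathcal{P}^m_n$ is the set of integer partitions $(\lambda_1\ge\cdots\ge\lambda_n\ge0)$ with $\lambda_i\le m(n-i+1)$. Type $A_n$: $V=\{x\in\mathbb{R}^{n+1}:\sum x_i=0\}$, positive roots $\alpha_{ij}=\varepsilon_i-\varepsilon_{j+1}$ ($1\le i\le j\le n$), $H_{\alpha,k}=\{v:\langle v,\alpha\rangle=k\}$; $\mathrm{Cat}^m(A_n)$ consists of the $H_{\alpha,k}$ with $\alpha$ positive, $0\le k\le m$; $\mathcal{R}^m_n$ is its set of dominant regions (regions contained in $\{v:\langle v,\alpha\rangle\ge0\ \forall\alpha>0\}$). The Shi tableau of $R\in\mathcal{R}^m_n$ is the family $k_{i,j}(R)\in\{0,\dots,m\}$, $1\le i\le j\le n$, where $k_{i,j}(R)$ is the unique $k$ with $k\le\langle\alpha_{ij},x\rangle\le k+1$ for all $x\in R$ if $k<m$, and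 $\langle\alpha_{ij},x\rangle\ge m$ for all $x\in R$ if $k=m$. Both tableaux are arranged in the staircase diagram of shape $(n,\dots,1)$ with entry $k_{i,j}$ in row $i$, column $n-j+1$. *)

theory Defs
  imports "HOL-Analysis.Analysis"
begin

definition partitions :: "nat \<Rightarrow> nat \<Rightarrow> (nat \<Rightarrow> int) set" where
  "partitions m n = {lam. (\<forall>i. i \<notin> {1..n} \<longrightarrow> lam i = 0)
      \<and> (\<forall>i\<in>{1..n}. 0 \<le> lam i \<and> lam i \<le> int (m * (n - i + 1)))
      \<and> (\<forall>i\<in>{1..<n}. lam (i+1) \<le> lam i)}"

function phik :: "nat \<Rightarrow> nat \<Rightarrow> (nat \<Rightarrow> int) \<Rightarrow> nat \<Rightarrow> nat \<Rightarrow> int" where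
  "phik m n lam i j =
     (if 1 \<le> i \<and> i \<le> j \<and> j \<le> n then
        min (int m) \<lceil>real_of_int (lam i - (\<Sum>l\<in>{j+1..n}. phik m n lam i l)
                                    + (\<Sum>l\<in>{i+1..j}. phik m n lam l j))
                     / real (j - i + 1)\<rceil>
      else 0)"
  by pat_completeness auto
termination
  by (relation "measures [\<lambda>(m,n,lam,i,j). n + 1 - i, \<lambda>(m,n,lam,i,j). n + 1 - j]") auto

definition phi_bar :: "nat \<Rightarrow> nat \<Rightarrow> (nat \<Rightarrow> int) \<Rightarrow> nat \<Rightarrow> nat \<Rightarrow> int" where
  "phi_bar m n lam = (\<lambda>i j. phik m n lam i j)"

text \<open>Type A_n: V = {x in R^(n+1) : sum x_i = 0}, points as functions on indices 1..n+1.\<close>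
definition VA :: "nat \<Rightarrow> (nat \<Rightarrow> real) set" where
  "VA n = {x. (\<forall>i. i \<notin> {1..n+1} \<longrightarrow> x i = 0) \<and> (\<Sum>i\<in>{1..n+1}. x i) = 0}"

text \<open>pairing with alpha_{ij} = e_i - e_{j+1}\<close>
definition pair_alpha :: "(nat \<Rightarrow> real) \<Rightarrow> nat \<Rightarrow> nat \<Rightarrow> real" where
  "pair_alpha x i j = x i - x (j + 1)"

definition hyperplane_A :: "nat \<Rightarrow> nat \<Rightarrow> nat \<Rightarrow> int \<Rightarrow> (nat \<Rightarrow> real) set" where
  "hyperplane_A n i j k = {v \<in> VA n. pair_alpha v i j = real_of_int k}"

definition cat_arr :: "nat \<Rightarrow> nat \<Rightarrow> (nat \<Rightarrow> real) set set" where
  "cat_arr m n = {hyperplane_A n i j k | i j k. 1 \<le> i \<and> i \<le> j \<and> j \<le> n \<and> 0 \<le> k \<and> k \<le> int m}"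

definition complement_arr :: "nat \<Rightarrow> nat \<Rightarrow> (nat \<Rightarrow> real) set" where
  "complement_arr m n = VA n - \<Union>(cat_arr m n)"

definition regions :: "nat \<Rightarrow> nat \<Rightarrow> (nat \<Rightarrow> real) set set" where
  "regions m n = {connected_component_set (complement_arr m n) x | x. x \<in> complement_arr m n}"

definition dominant_cone :: "nat \<Rightarrow> (nat \<Rightarrow> real) set" where
  "dominant_cone n = {v. \<forall>i j. 1 \<le> i \<and> i \<le> j \<and> j \<le> n \<longrightarrow> pair_alpha v i j \<ge> 0}"

definition dominant_regions :: "nat \<Rightarrow> nat \<Rightarrow> (nat \<Rightarrow> real) set set" where
  "dominant_regions m n = {R \<in> regions m n. R \<subseteq> dominant_cone n}"

definition shi_k :: "nat \<Rightarrow> (nat \<Rightarrow> real) set \<Rightarrow> nat \<Rightarrow> nat \<Rightarrow> int" where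
  "shi_k m R i j = (THE k. 0 \<le> k \<and> k \<le> int m \<and>
      (if k < int m then (\<forall>x\<in>R. real_of_int k \<le> pair_alpha x i j \<and> pair_alpha x i j \<le> real_of_int k + 1)
       else (\<forall>x\<in>R. pair_alpha x i j \<ge> real m)))"

definition shi_tableau :: "nat \<Rightarrow> nat \<Rightarrow> (nat \<Rightarrow> real) set \<Rightarrow> nat \<Rightarrow> nat \<Rightarrow> int" where
  "shi_tableau m n R = (\<lambda>i j. if 1 \<le> i \<and> i \<le> j \<and> j \<le> n then shi_k m R i j else 0)"

end

theory Submission
  imports Defs
begin

declare phik.simps[simp del]

definition tabx :: "nat \<Rightarrow> nat \<Rightarrow> (nat \<Rightarrow> real) \<Rightarrow> nat \<Rightarrow> nat \<Rightarrow> int" where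
  "tabx m n x i j = (if 1 \<le> i \<and> i \<le> j \<and> j \<le> n then min (int m) \<lfloor>pair_alpha x i j\<rfloor> else 0)"

definition lamx :: "nat \<Rightarrow> nat \<Rightarrow> (nat \<Rightarrow> real) \<Rightarrow> nat \<Rightarrow> int" where
  "lamx m n x = (\<lambda>i. if i \<in> {1..n} then (\<Sum>j=i..n. tabx m n x i j) else 0)"

lemma local_floor:
  fixes a b :: real
  assumes "0 \<le> a" "0 \<le> b"
  shows "min (int m) \<lfloor>a+b\<rfloor> - 1 \<le> min (int m) \<lfloor>a\<rfloor> + min (int m) \<lfloor>b\<rfloor>"
    and "min (int m) \<lfloor>a+b\<rfloor> < int m \<Longrightarrow> min (int m) \<lfloor>a\<rfloor> + min (int m) \<lfloor>b\<rfloor> \<le> min (int m) \<lfloor>a+b\<rfloor>"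
proof -
  have f1: "\<lfloor>a\<rfloor> + \<lfloor>b\<rfloor> \<le> \<lfloor>a+b\<rfloor>" by (rule le_floor_add)
  have f2: "\<lfloor>a+b\<rfloor> \<le> \<lfloor>a\<rfloor> + \<lfloor>b\<rfloor> + 1"
  proof -
    have "a + b < of_int (\<lfloor>a\<rfloor> + \<lfloor>b\<rfloor> + 2)"
      using real_of_int_floor_add_one_gt[of a] real_of_int_floor_add_one_gt[of b] by linarith
    then have "\<lfloor>a+b\<rfloor> < \<lfloor>a\<rfloor> + \<lfloor>b\<rfloor> + 2" by (simp add: floor_less_iff)
    then show ?thesis by simp
  qed
  have "0 \<le> \<lfloor>a\<rfloor>" "0 \<le> \<lfloor>b\<rfloor>" using assms by auto
  then show "min (int m) \<lfloor>a+b\<rfloor> - 1 \<le> min (int m) \<lfloor>a\<rfloor> + min (int m) \<lfloor>b\<rfloor>"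
    and "min (int m) \<lfloor>a+b\<rfloor> < int m \<Longrightarrow> min (int m) \<lfloor>a\<rfloor> + min (int m) \<lfloor>b\<rfloor> \<le> min (int m) \<lfloor>a+b\<rfloor>"
    using f1 f2 by linarith+
qed

lemma lamx_split:
  assumes "1 \<le> i" "i \<le> j" "j \<le> n"
  shows "lamx m n x i - (\<Sum>l\<in>{j+1..n}. tabx m n x i l) = tabx m n x i j + (\<Sum>l\<in>{i..<j}. tabx m n x i l)"
proof -
  have "{i..n} = {i..j} \<union> {j+1..n}" using assms by auto
  then have "(\<Sum>l=i..n. tabx m n x i l) = (\<Sum>l=i..j. tabx m n x i l) + (\<Sum>l\<in>{j+1..n}. tabx m n x i l)"
    by (simp add: sum.union_disjoint ivl_disj_int)
  moreover have "{i..j} = insert j {i..<j}" using assms by auto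
  then have "(\<Sum>l=i..j. tabx m n x i l) = tabx m n x i j + (\<Sum>l\<in>{i..<j}. tabx m n x i l)" by simp
  ultimately show ?thesis using assms by (simp add: lamx_def)
qed

lemma phik_tabx_aux:
  "lam = lamx m n x \<Longrightarrow> (\<forall>i j. 1 \<le> i \<and> i \<le> j \<and> j \<le> n \<longrightarrow> pair_alpha x i j \<ge> 0)
   \<Longrightarrow> phik m n lam i j = tabx m n x i j"
proof (induction m n lam i j rule: phik.induct)
  case (1 m n lam i j)
  note wdom = "1.prems"(2)
  note lam = "1.prems"(1)
  show ?case
  proof (cases "1 \<le> i \<and> i \<le> j \<and> j \<le> n")
    case False
    have "phik m n lam i j = 0" by (subst phik.simps) (simp only: False if_False)
    then show ?thesis using False unfolding tabx_def by auto
  next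
    case True
    then have ij: "1 \<le> i" "i \<le> j" "j \<le> n" by auto
    have s1: "(\<Sum>l\<in>{j+1..n}. phik m n lam i l) = (\<Sum>l\<in>{j+1..n}. tabx m n x i l)"
      by (rule sum.cong) (use 1 True in auto)
    have s2: "(\<Sum>l\<in>{i+1..j}. phik m n lam l j) = (\<Sum>l\<in>{i..<j}. tabx m n x (l+1) j)"
    proof -
      have "(\<Sum>l\<in>{i+1..j}. phik m n lam l j) = (\<Sum>l\<in>{i+1..j}. tabx m n x l j)"
        by (rule sum.cong) (use 1 True in auto)
      also have "\<dots> = (\<Sum>l\<in>{i..<j}. tabx m n x (l+1) j)"
      proof -
        have "(\<lambda>l. l+1) ` {i..<j} = {i+1..j}" using ij
          by (auto simp: image_iff intro!: bexI[where x="_ - 1"])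
        moreover have "inj_on (\<lambda>l. l+1) {i..<j}" by auto
        ultimately show ?thesis by (metis (no_types, lifting) sum.reindex_cong)
      qed
      finally show ?thesis .
    qed
    define K where "K = tabx m n x i j"
    define N where "N = lamx m n x i - (\<Sum>l\<in>{j+1..n}. tabx m n x i l) + (\<Sum>l\<in>{i..<j}. tabx m n x (l+1) j)"
    have N: "N = K + (\<Sum>l\<in>{i..<j}. tabx m n x i l + tabx m n x (l+1) j)"
      unfolding N_def K_def using lamx_split[OF ij, of m x] by (simp add: sum.distrib)
    have Kd: "K = min (int m) \<lfloor>pair_alpha x i j\<rfloor>" using ij by (simp add: K_def tabx_def)
    have loc: "K - 1 \<le> tabx m n x i l + tabx m n x (l+1) j \<and> (K < int m \<longrightarrow> tabx m n x i l + tabx m n x (l+1) j \<le> K)"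
      if l: "l \<in> {i..<j}" for l
    proof -
      have a1: "0 \<le> pair_alpha x i l" "0 \<le> pair_alpha x (l+1) j" using wdom l ij by auto
      have e: "pair_alpha x i j = pair_alpha x i l + pair_alpha x (l+1) j" by (simp add: pair_alpha_def)
      have t1: "tabx m n x i l = min (int m) \<lfloor>pair_alpha x i l\<rfloor>" "tabx m n x (l+1) j = min (int m) \<lfloor>pair_alpha x (l+1) j\<rfloor>"
        using l ij by (auto simp: tabx_def)
      show ?thesis using local_floor[OF a1, of m] unfolding Kd t1 e by auto
    qed
    have d: "card {i..<j} = j - i" by simp
    have lo: "N \<ge> K + int (j - i) * (K - 1)"
    proof -
      have "(\<Sum>l\<in>{i..<j}. K - 1) \<le> (\<Sum>l\<in>{i..<j}. tabx m n x i l + tabx m n x (l+1) j)"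
        by (rule sum_mono) (use loc in auto)
      then show ?thesis using N by simp
    qed
    have hi: "K < int m \<Longrightarrow> N \<le> K + int (j - i) * K"
    proof -
      assume "K < int m"
      then have "(\<Sum>l\<in>{i..<j}. tabx m n x i l + tabx m n x (l+1) j) \<le> (\<Sum>l\<in>{i..<j}. K)"
        by (intro sum_mono) (use loc in auto)
      then show ?thesis using N by simp
    qed
    define dd where "dd = int (j - i + 1)"
    have ddpos: "dd > 0" by (simp add: dd_def)
    have lo': "N > dd * (K - 1)" using lo by (simp add: dd_def algebra_simps)
    have hi': "K < int m \<Longrightarrow> N \<le> dd * K" using hi by (simp add: dd_def algebra_simps)
    have rdd: "real (j - i + 1) = real_of_int dd" by (simp add: dd_def)
    have gt: "real_of_int K - 1 < real_of_int N / real (j - i + 1)"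
    proof -
      have "real_of_int (dd * (K - 1)) < real_of_int N" using lo' by linarith
      then show ?thesis unfolding rdd using ddpos by (simp add: field_simps)
    qed
    have Km: "K \<le> int m" using Kd by simp
    have "min (int m) \<lceil>real_of_int N / real (j - i + 1)\<rceil> = K"
    proof (cases "K < int m")
      case True
      have "real_of_int N / real (j - i + 1) \<le> real_of_int K"
      proof -
        have "real_of_int N \<le> real_of_int (dd * K)" using hi'[OF True] by linarith
        then show ?thesis unfolding rdd using ddpos by (simp add: field_simps)
      qed
      then have "\<lceil>real_of_int N / real (j - i + 1)\<rceil> = K" using gt by (intro ceiling_unique) auto
      then show ?thesis using True by simp
    next
      case False
      then have "K = int m" using Km by simp
      moreover have "K \<le> \<lceil>real_of_int N / real (j - i + 1)\<rceil>" using gt by (simp add: le_ceiling_iff)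
      ultimately show ?thesis by simp
    qed
    moreover have "phik m n lam i j = min (int m) \<lceil>real_of_int (lam i - (\<Sum>l\<in>{j+1..n}. phik m n lam i l)
                                    + (\<Sum>l\<in>{i+1..j}. phik m n lam l j)) / real (j - i + 1)\<rceil>"
      by (subst phik.simps) (simp only: if_P[OF True])
    moreover have "lam i - (\<Sum>l\<in>{j+1..n}. phik m n lam i l) + (\<Sum>l\<in>{i+1..j}. phik m n lam l j) = N"
      unfolding s1 s2 N_def using lam by simp
    ultimately show ?thesis unfolding K_def by metis
  qed
qed

lemma phik_tabx:
  assumes "\<forall>i j. 1 \<le> i \<and> i \<le> j \<and> j \<le> n \<longrightarrow> pair_alpha x i j \<ge> 0"
  shows "phik m n (lamx m n x) i j = tabx m n x i j"
  using phik_tabx_aux[OF refl assms] .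

lemma lamx_part:
  assumes wdom: "\<forall>i j. 1 \<le> i \<and> i \<le> j \<and> j \<le> n \<longrightarrow> pair_alpha x i j \<ge> 0"
  shows "lamx m n x \<in> partitions m n"
proof -
  have nn: "0 \<le> tabx m n x i j" for i j
    using wdom by (auto simp: tabx_def)
  have le: "tabx m n x i j \<le> int m" for i j by (auto simp: tabx_def)
  have mono: "tabx m n x (i+1) j \<le> tabx m n x i j" if "1 \<le> i" "i+1 \<le> j" "j \<le> n" for i j
  proof -
    have "pair_alpha x i j = pair_alpha x i i + pair_alpha x (i+1) j" by (simp add: pair_alpha_def)
    moreover have "pair_alpha x i i \<ge> 0" using wdom that by auto
    ultimately have "\<lfloor>pair_alpha x (i+1) j\<rfloor> \<le> \<lfloor>pair_alpha x i j\<rfloor>" by (intro floor_mono) linarith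
    then show ?thesis using that by (auto simp: tabx_def)
  qed
  have A: "\<forall>i. i \<notin> {1..n} \<longrightarrow> lamx m n x i = 0" by (simp add: lamx_def)
  have B: "\<forall>i\<in>{1..n}. 0 \<le> lamx m n x i \<and> lamx m n x i \<le> int (m * (n - i + 1))"
  proof
    fix i assume i: "i \<in> {1..n}"
    have "0 \<le> (\<Sum>j=i..n. tabx m n x i j)" by (intro sum_nonneg) (use nn in auto)
    moreover have "(\<Sum>j=i..n. tabx m n x i j) \<le> (\<Sum>j=i..n. int m)" by (intro sum_mono) (use le in auto)
    moreover have "(\<Sum>j=i..n. int m) = int (m * (n - i + 1))"
    proof -
      have c: "card {i..n} = n - i + 1" using i by auto
      have "(\<Sum>j=i..n. int m) = int (card {i..n}) * int m" by simp
      also have "\<dots> = int (m * (n - i + 1))" unfolding c by (metis of_nat_mult mult.commute)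
      finally show ?thesis .
    qed
    ultimately show "0 \<le> lamx m n x i \<and> lamx m n x i \<le> int (m * (n - i + 1))"
      using i by (simp add: lamx_def)
  qed
  have C: "\<forall>i\<in>{1..<n}. lamx m n x (i+1) \<le> lamx m n x i"
  proof
    fix i assume i: "i \<in> {1..<n}"
    have "(\<Sum>j=i+1..n. tabx m n x (i+1) j) \<le> (\<Sum>j=i+1..n. tabx m n x i j)"
      by (intro sum_mono) (use mono i in auto)
    also have "\<dots> \<le> (\<Sum>j=i..n. tabx m n x i j)"
      by (intro sum_mono2) (use nn in auto)
    finally show "lamx m n x (i+1) \<le> lamx m n x i" using i by (simp add: lamx_def)
  qed
  show ?thesis unfolding partitions_def using A B C by blast
qed

lemma alpha_same_side:
  assumes x: "x \<in> complement_arr m n"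
    and y: "y \<in> connected_component_set (complement_arr m n) x"
    and ij: "1 \<le> i" "i \<le> j" "j \<le> n" and k: "0 \<le> k" "k \<le> int m"
  shows "(pair_alpha y i j < real_of_int k) \<longleftrightarrow> (pair_alpha x i j < real_of_int k)"
proof -
  let ?C = "connected_component_set (complement_arr m n) x"
  let ?f = "\<lambda>z::nat\<Rightarrow>real. pair_alpha z i j"
  have cC: "connected ?C" by (rule connected_connected_component)
  have cont: "continuous_on ?C ?f" unfolding pair_alpha_def
    by (intro continuous_intros continuous_on_subset[OF continuous_on_product_coordinates]) auto
  have cf: "connected (?f ` ?C)" by (rule connected_continuous_image[OF cont cC])
  have xC: "x \<in> ?C" using x by (simp add: connected_component_refl)
  have sub: "?C \<subseteq> complement_arr m n" by (rule connected_component_subset)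
  have nohit: "?f z \<noteq> real_of_int k" if "z \<in> ?C" for z
  proof
    assume h: "?f z = real_of_int k"
    have zc: "z \<in> complement_arr m n" using sub that by auto
    then have zV: "z \<in> VA n" by (simp add: complement_arr_def)
    have "z \<in> hyperplane_A n i j k" using zV h by (simp add: hyperplane_A_def)
    moreover have "hyperplane_A n i j k \<in> cat_arr m n" using ij k unfolding cat_arr_def by blast
    ultimately show False using zc by (auto simp: complement_arr_def)
  qed
  show ?thesis
  proof (rule ccontr)
    assume ne: "\<not> ?thesis"
    have "real_of_int k \<in> ?f ` ?C"
    proof (cases "?f y < real_of_int k")
      case True
      then have "?f x \<ge> real_of_int k" using ne by auto
      then show ?thesis using connected_contains_Icc[OF cf, of "?f y" "?f x"] y xC True by auto
    next
      case False
      then have "?f x < real_of_int k" using ne by auto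
      then show ?thesis using connected_contains_Icc[OF cf, of "?f x" "?f y"] y xC False by auto
    qed
    then obtain z where z1: "real_of_int k = ?f z" and z2: "z \<in> ?C" by (rule imageE)
    show False using nohit[OF z2] z1 by simp
  qed
qed

lemma nohit_pt:
  assumes x: "x \<in> complement_arr m n" and ij: "1 \<le> i" "i \<le> j" "j \<le> n" and k: "0 \<le> k" "k \<le> int m"
  shows "pair_alpha x i j \<noteq> real_of_int k"
proof
  assume h: "pair_alpha x i j = real_of_int k"
  have "x \<in> VA n" using x by (simp add: complement_arr_def)
  then have "x \<in> hyperplane_A n i j k" using h by (simp add: hyperplane_A_def)
  moreover have "hyperplane_A n i j k \<in> cat_arr m n" using ij k unfolding cat_arr_def by blast
  ultimately show False using x by (auto simp: complement_arr_def)
qed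

lemma shi_k_eq:
  assumes x: "x \<in> complement_arr m n" and ij: "1 \<le> i" "i \<le> j" "j \<le> n"
    and pos: "pair_alpha x i j > 0"
  shows "shi_k m (connected_component_set (complement_arr m n) x) i j = min (int m) \<lfloor>pair_alpha x i j\<rfloor>"
proof -
  let ?R = "connected_component_set (complement_arr m n) x"
  define a where "a = pair_alpha x i j"
  define K where "K = min (int m) \<lfloor>a\<rfloor>"
  have xR: "x \<in> ?R" using x by (simp add: connected_component_refl)
  have fl0: "0 \<le> \<lfloor>a\<rfloor>" using pos by (simp add: a_def)
  have fa1: "a < real_of_int \<lfloor>a\<rfloor> + 1" "real_of_int \<lfloor>a\<rfloor> \<le> a" by linarith+
  have nh: "a \<noteq> real_of_int k" if "0 \<le> k" "k \<le> int m" for k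
    using nohit_pt[OF x ij that] by (simp add: a_def)
  have same: "(pair_alpha y i j < real_of_int k) \<longleftrightarrow> (a < real_of_int k)"
    if "y \<in> ?R" "0 \<le> k" "k \<le> int m" for y k
    using alpha_same_side[OF x that(1) ij that(2,3)] by (simp add: a_def)
  have P: "0 \<le> K \<and> K \<le> int m \<and>
      (if K < int m then (\<forall>y\<in>?R. real_of_int K \<le> pair_alpha y i j \<and> pair_alpha y i j \<le> real_of_int K + 1)
       else (\<forall>y\<in>?R. pair_alpha y i j \<ge> real m))"
  proof (cases "K < int m")
    case True
    then have KK: "K = \<lfloor>a\<rfloor>" by (simp add: K_def)
    have "real_of_int K \<le> pair_alpha y i j \<and> pair_alpha y i j \<le> real_of_int K + 1" if "y \<in> ?R" for y
    proof -
      have "\<not> pair_alpha y i j < real_of_int K" using same[OF that, of K] fa1 KK fl0 True by auto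
      moreover have "pair_alpha y i j < real_of_int (K + 1)" using same[OF that, of "K+1"] fa1 KK fl0 True by auto
      ultimately show ?thesis by simp
    qed
    then show ?thesis using True fl0 KK by auto
  next
    case False
    then have Km: "K = int m" by (simp add: K_def)
    then have "int m \<le> \<lfloor>a\<rfloor>" by (simp add: K_def)
    then have "real m \<le> a" using fa1 by linarith
    moreover have "a \<noteq> real m" using nh[of "int m"] by simp
    ultimately have am: "\<not> a < real_of_int (int m)" by simp
    have "pair_alpha y i j \<ge> real m" if "y \<in> ?R" for y
      using same[OF that, of "int m"] am by simp
    then show ?thesis using Km by auto
  qed
  have U: "k = K" if "0 \<le> k \<and> k \<le> int m \<and>
      (if k < int m then (\<forall>y\<in>?R. real_of_int k \<le> pair_alpha y i j \<and> pair_alpha y i j \<le> real_of_int k + 1)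
       else (\<forall>y\<in>?R. pair_alpha y i j \<ge> real m))" for k
  proof (cases "k < int m")
    case True
    then have "real_of_int k \<le> a" "a \<le> real_of_int k + 1" using that xR by (auto simp: a_def)
    moreover have "a \<noteq> real_of_int (k+1)" using nh[of "k+1"] that True by auto
    ultimately have "\<lfloor>a\<rfloor> = k" by (intro floor_unique) auto
    then show ?thesis using True by (simp add: K_def)
  next
    case False
    then have "k = int m" using that by auto
    moreover have "real m \<le> a" using that xR False by (auto simp: a_def)
    then have "int m \<le> \<lfloor>a\<rfloor>" by (simp add: le_floor_iff)
    ultimately show ?thesis by (simp add: K_def)
  qed
  have "shi_k m ?R i j = K" unfolding shi_k_def
    by (rule the_equality, rule P, rule U, assumption)
  then show ?thesis by (simp add: K_def a_def)
qed

lemma floor_count: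
  fixes u :: real assumes "0 \<le> u"
  shows "min (int m) \<lfloor>u\<rfloor> = int (card {c\<in>{1..m}. real c \<le> u})"
proof -
  have fl: "0 \<le> \<lfloor>u\<rfloor>" using assms by simp
  have "{c\<in>{1..m}. real c \<le> u} = {1..min m (nat \<lfloor>u\<rfloor>)}"
  proof (intro set_eqI iffI)
    fix c assume "c \<in> {c\<in>{1..m}. real c \<le> u}"
    then have "c \<in> {1..m}" "int c \<le> \<lfloor>u\<rfloor>" by (auto simp: le_floor_iff)
    then show "c \<in> {1..min m (nat \<lfloor>u\<rfloor>)}" by auto
  next
    fix c assume "c \<in> {1..min m (nat \<lfloor>u\<rfloor>)}"
    then have "c \<in> {1..m}" "int c \<le> \<lfloor>u\<rfloor>" using fl by auto
    then show "c \<in> {c\<in>{1..m}. real c \<le> u}" by (auto simp: le_floor_iff)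
  qed
  moreover have "int (min m (nat \<lfloor>u\<rfloor>)) = min (int m) \<lfloor>u\<rfloor>" using fl by (simp add: of_nat_min)
  ultimately show ?thesis by simp
qed

lemma pick_t:
  fixes y :: "nat \<Rightarrow> real" and J :: "nat set" and b :: real and s :: int
  assumes fin: "finite J" and yb: "\<forall>p\<in>J. y p \<le> b"
    and gen: "\<forall>p\<in>J. \<forall>q\<in>J. p \<noteq> q \<longrightarrow> (\<forall>z::int. y p - y q \<noteq> real_of_int z)"
    and s1: "(\<Sum>p\<in>J. min (int m) \<lfloor>b - y p\<rfloor>) \<le> s" and s2: "s \<le> int m * int (card J)"
  shows "\<exists>t. t > b \<and> (\<forall>p\<in>J. \<forall>z::int. t - y p \<noteq> real_of_int z) \<and> (\<Sum>p\<in>J. min (int m) \<lfloor>t - y p\<rfloor>) = s"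
proof -
  define g where "g = (\<lambda>(p, c::nat). y p + real c)"
  define Q where "Q = g ` (J \<times> {1..m})"
  have inj: "inj_on g (J \<times> {1..m})"
  proof (rule inj_onI)
    fix u v assume u: "u \<in> J \<times> {1..m}" and v: "v \<in> J \<times> {1..m}" and e: "g u = g v"
    obtain p c where pc: "u = (p, c)" by fastforce
    obtain q d where qd: "v = (q, d)" by fastforce
    have e': "y p + real c = y q + real d" using e by (simp add: g_def pc qd)
    have "p = q"
    proof (rule ccontr)
      assume "p \<noteq> q"
      then have "y p - y q \<noteq> real_of_int (int d - int c)" using gen u v pc qd by blast
      then show False using e' by simp
    qed
    then show "u = v" using e' pc qd by simp
  qed
  have finQ: "finite Q" by (simp add: Q_def fin)
  have cardQ: "card Q = card J * m" unfolding Q_def using card_image[OF inj] fin by (simp add: card_cartesian_product)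
  define G where "G = (\<lambda>t. card {q\<in>Q. q \<le> t})"
  have cnt: "(\<Sum>p\<in>J. min (int m) \<lfloor>t - y p\<rfloor>) = int (G t)" if tb: "b \<le> t" for t
  proof -
    define S where "S = (SIGMA p:J. {c\<in>{1..m}. real c \<le> t - y p})"
    have "(\<Sum>p\<in>J. min (int m) \<lfloor>t - y p\<rfloor>) = (\<Sum>p\<in>J. int (card {c\<in>{1..m}. real c \<le> t - y p}))"
      by (intro sum.cong refl floor_count) (use yb tb in force)
    also have "\<dots> = int (\<Sum>p\<in>J. card {c\<in>{1..m}. real c \<le> t - y p})" by simp
    also have "(\<Sum>p\<in>J. card {c\<in>{1..m}. real c \<le> t - y p}) = card S"
      unfolding S_def by (rule card_SigmaI[symmetric]) (use fin in auto)
    also have "card S = card (g ` S)"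
      by (rule card_image[symmetric], rule inj_on_subset[OF inj]) (auto simp: S_def)
    also have "g ` S = {q\<in>Q. q \<le> t}"
      unfolding S_def Q_def g_def by (auto simp: image_iff algebra_simps) (metis add.commute atLeastAtMost_iff)
    finally show ?thesis by (simp add: G_def)
  qed
  define E where "E = insert b Q"
  define A where "A = {e\<in>E. int (G e) \<le> s}"
  have finE: "finite E" using finQ by (simp add: E_def)
  have bA: "b \<in> A" using cnt[of b] s1 by (simp add: A_def E_def)
  have finA: "finite A" using finE by (simp add: A_def)
  define lo where "lo = Max A"
  have loA: "lo \<in> A" using finA bA unfolding lo_def by (intro Max_in) auto
  have blo: "b \<le> lo" using finA bA by (simp add: lo_def)
  have maxA: "e \<le> lo" if "e \<in> A" for e using finA that by (simp add: lo_def)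
  define U where "U = {e\<in>E. lo < e}"
  have finU: "finite U" using finE by (simp add: U_def)
  define hi where "hi = (if U = {} then lo + 1 else Min U)"
  have lohi: "lo < hi" using finU by (auto simp: hi_def U_def)
  have key: "{q\<in>Q. q \<le> t} = {q\<in>Q. q \<le> lo}" if "lo < t" "t < hi" for t
  proof -
    have nq: "\<not> (q \<in> Q \<and> lo < q \<and> q \<le> t)" for q
    proof
      assume h: "q \<in> Q \<and> lo < q \<and> q \<le> t"
      then have "q \<in> U" by (simp add: U_def E_def)
      then have "hi \<le> q" using finU by (auto simp: hi_def)
      then show False using h that by simp
    qed
    show ?thesis
    proof (intro set_eqI iffI)
      fix q assume "q \<in> {q\<in>Q. q \<le> t}"
      then show "q \<in> {q\<in>Q. q \<le> lo}" using nq[of q] by (cases "q \<le> lo") auto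
    next
      fix q assume "q \<in> {q\<in>Q. q \<le> lo}"
      then show "q \<in> {q\<in>Q. q \<le> t}" using that by auto
    qed
  qed
  have Glo: "int (G lo) = s"
  proof (rule ccontr)
    assume "int (G lo) \<noteq> s"
    then have lt: "int (G lo) < s" using loA by (simp add: A_def)
    then have "int (G lo) < int (card Q)" using s2 cardQ by (simp add: mult.commute)
    then have "G lo < card Q" by simp
    then have "{q\<in>Q. q \<le> lo} \<noteq> Q" by (auto simp: G_def)
    then obtain q0 where q0: "q0 \<in> Q" "\<not> q0 \<le> lo" by blast
    then have Une: "U \<noteq> {}" by (auto simp: U_def E_def)
    define h where "h = Min U"
    have hU: "h \<in> U" using Une finU by (simp add: h_def)
    have hmin: "h \<le> e" if "e \<in> U" for e using finU that by (simp add: h_def)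
    have hQ: "h \<in> Q" and hlo: "lo < h" using hU blo by (auto simp: U_def E_def)
    have "{q\<in>Q. q \<le> h} = insert h {q\<in>Q. q \<le> lo}"
    proof (intro set_eqI iffI)
      fix q assume "q \<in> {q\<in>Q. q \<le> h}"
      moreover have "lo < q \<Longrightarrow> q \<in> Q \<Longrightarrow> h \<le> q" using hmin by (simp add: U_def E_def)
      ultimately show "q \<in> insert h {q\<in>Q. q \<le> lo}" by force
    next
      fix q assume "q \<in> insert h {q\<in>Q. q \<le> lo}"
      then show "q \<in> {q\<in>Q. q \<le> h}" using hQ hlo by auto
    qed
    then have "G h = G lo + 1" using finQ hlo by (simp add: G_def)
    then have "h \<in> A" using lt hQ by (simp add: A_def E_def)
    then show False using maxA hlo by fastforce
  qed
  define C where "C = (\<lambda>(p, z::int). y p + real_of_int z) ` (J \<times> (UNIV::int set))"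
  have cC: "countable C" unfolding C_def using fin by (intro countable_image) (simp add: countable_finite)
  have "\<not> {lo<..<hi} \<subseteq> C"
  proof
    assume "{lo<..<hi} \<subseteq> C"
    then have "countable {lo<..<hi}" using cC countable_subset by blast
    then show False using uncountable_open_interval[of lo hi] lohi by simp
  qed
  then obtain t where t: "lo < t" "t < hi" "t \<notin> C" unfolding subset_iff greaterThanLessThan_iff by blast
  have tb: "b < t" using t blo by simp
  have tg: "\<forall>p\<in>J. \<forall>z::int. t - y p \<noteq> real_of_int z"
  proof (intro ballI allI notI)
    fix p z assume "p \<in> J" "t - y p = real_of_int z"
    then have "t \<in> C" unfolding C_def by (force simp: image_iff algebra_simps)
    then show False using t by simp
  qed
  have "(\<Sum>p\<in>J. min (int m) \<lfloor>t - y p\<rfloor>) = s"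
    using cnt[of t] tb key[OF t(1,2)] Glo by (simp add: G_def)
  then show ?thesis using tb tg by blast
qed

lemma build:
  assumes lam: "lam \<in> partitions m n" and r: "r \<le> n"
  shows "\<exists>x::nat\<Rightarrow>real. (\<forall>p\<in>{n+1-r..n+1}. \<forall>q\<in>{n+1-r..n+1}. p < q \<longrightarrow> x q < x p)
     \<and> (\<forall>p\<in>{n+1-r..n+1}. \<forall>q\<in>{n+1-r..n+1}. p \<noteq> q \<longrightarrow> (\<forall>z::int. x p - x q \<noteq> real_of_int z))
     \<and> (\<forall>i\<in>{n+1-r..n}. (\<Sum>j=i..n. min (int m) \<lfloor>x i - x (j+1)\<rfloor>) = lam i)"
  using r
proof (induction r)
  case 0
  show ?case by (intro exI[of _ "\<lambda>_. 0"]) auto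
next
  case (Suc r)
  then have rn: "r < n" by simp
  obtain x :: "nat \<Rightarrow> real" where
    dec: "\<forall>p\<in>{n+1-r..n+1}. \<forall>q\<in>{n+1-r..n+1}. p < q \<longrightarrow> x q < x p" and
    gen: "\<forall>p\<in>{n+1-r..n+1}. \<forall>q\<in>{n+1-r..n+1}. p \<noteq> q \<longrightarrow> (\<forall>z::int. x p - x q \<noteq> real_of_int z)" and
    sm: "\<forall>i\<in>{n+1-r..n}. (\<Sum>j=i..n. min (int m) \<lfloor>x i - x (j+1)\<rfloor>) = lam i"
    using Suc.IH rn by auto
  define i0 where "i0 = n - r"
  have i0: "1 \<le> i0" "i0 \<le> n" "n + 1 - Suc r = i0" "n + 1 - r = i0 + 1" using rn by (auto simp: i0_def)
  have P1: "\<forall>i. i \<notin> {1..n} \<longrightarrow> lam i = 0"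
    and P2: "\<forall>i\<in>{1..n}. 0 \<le> lam i \<and> lam i \<le> int (m * (n - i + 1))"
    and P3: "\<forall>i\<in>{1..<n}. lam (i+1) \<le> lam i" using lam by (auto simp: partitions_def)
  have d: "\<And>p q. p \<in> {i0+1..n+1} \<Longrightarrow> q \<in> {i0+1..n+1} \<Longrightarrow> p < q \<Longrightarrow> x q < x p"
    using dec unfolding i0(4) by blast
  have g: "\<And>p q z. p \<in> {i0+1..n+1} \<Longrightarrow> q \<in> {i0+1..n+1} \<Longrightarrow> p \<noteq> q \<Longrightarrow> x p - x q \<noteq> real_of_int z"
    using gen unfolding i0(4) by blast
  define J where "J = {i0+1..n+1}"
  have JS: "J = {Suc i0..Suc n}" by (simp add: J_def)
  have finJ: "finite J" by (simp add: J_def)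
  have cardJ: "card J = n - i0 + 1" using i0 by (simp add: J_def)
  have yb: "\<forall>p\<in>J. x p \<le> x (i0+1)"
  proof
    fix p assume "p \<in> J"
    then show "x p \<le> x (i0+1)" using d[of "i0+1" p] i0 by (cases "p = i0+1") (auto simp: J_def)
  qed
  have genJ: "\<forall>p\<in>J. \<forall>q\<in>J. p \<noteq> q \<longrightarrow> (\<forall>z::int. x p - x q \<noteq> real_of_int z)"
    using g by (simp add: J_def)
  have fb: "(\<Sum>p\<in>J. min (int m) \<lfloor>x (i0+1) - x p\<rfloor>) = lam (i0+1)"
  proof -
    have "J = insert (i0+1) {Suc (i0+1)..Suc n}" using i0 by (auto simp: J_def)
    then have "(\<Sum>p\<in>J. min (int m) \<lfloor>x (i0+1) - x p\<rfloor>)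
        = min (int m) \<lfloor>x (i0+1) - x (i0+1)\<rfloor> + (\<Sum>p\<in>{Suc (i0+1)..Suc n}. min (int m) \<lfloor>x (i0+1) - x p\<rfloor>)"
      by simp
    also have "\<dots> = (\<Sum>j\<in>{i0+1..n}. min (int m) \<lfloor>x (i0+1) - x (Suc j)\<rfloor>)"
      by (simp only: sum.shift_bounds_cl_Suc_ivl) simp
    also have "\<dots> = lam (i0+1)"
    proof (cases "i0 < n")
      case True
      then show ?thesis using sm i0 by simp
    next
      case False
      then have "i0 = n" using i0 by simp
      then show ?thesis using P1 by simp
    qed
    finally show ?thesis .
  qed
  have mono: "lam (i0+1) \<le> lam i0"
  proof (cases "i0 < n")
    case True then show ?thesis using P3 i0 by simp
  next
    case False
    then have "i0 = n" using i0 by simp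
    then show ?thesis using P1 P2 i0 by auto
  qed
  have up: "lam i0 \<le> int m * int (card J)"
  proof -
    have "lam i0 \<le> int (m * (n - i0 + 1))" using P2 i0 by auto
    then show ?thesis unfolding cardJ by (metis of_nat_mult)
  qed
  obtain t where tb: "t > x (i0+1)" and tg: "\<forall>p\<in>J. \<forall>z::int. t - x p \<noteq> real_of_int z"
    and ts: "(\<Sum>p\<in>J. min (int m) \<lfloor>t - x p\<rfloor>) = lam i0"
    using pick_t[OF finJ yb genJ, of m "lam i0"] fb mono up by auto
  define x' where "x' = x(i0 := t)"
  have A: "\<forall>p\<in>{i0..n+1}. \<forall>q\<in>{i0..n+1}. p < q \<longrightarrow> x' q < x' p"
  proof (intro ballI impI)
    fix p q assume p: "p \<in> {i0..n+1}" and q: "q \<in> {i0..n+1}" and pq: "p < q"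
    show "x' q < x' p"
    proof (cases "p = i0")
      case True
      then have "x' q = x q" "x' p = t" using pq by (auto simp: x'_def)
      moreover have "x q \<le> x (i0+1)" using yb q pq True by (auto simp: J_def)
      ultimately show ?thesis using tb by simp
    next
      case False
      then have "x' q = x q" "x' p = x p" using pq p by (auto simp: x'_def)
      then show ?thesis using d[of p q] p q pq False by auto
    qed
  qed
  have B: "\<forall>p\<in>{i0..n+1}. \<forall>q\<in>{i0..n+1}. p \<noteq> q \<longrightarrow> (\<forall>z::int. x' p - x' q \<noteq> real_of_int z)"
  proof (intro ballI impI allI)
    fix p q and z :: int assume p: "p \<in> {i0..n+1}" and q: "q \<in> {i0..n+1}" and pq: "p \<noteq> q"
    show "x' p - x' q \<noteq> real_of_int z"
    proof (cases "p = i0")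
      case True
      then have "x' q = x q" "x' p = t" "q \<in> J" using pq q by (auto simp: x'_def J_def)
      then show ?thesis using tg by auto
    next
      case False
      note pF = False
      show ?thesis
      proof (cases "q = i0")
        case True
        then have "x' p = x p" "x' q = t" "p \<in> J" using pq p by (auto simp: x'_def J_def)
        moreover have "t - x p \<noteq> real_of_int (- z)" using tg \<open>p \<in> J\<close> by blast
        ultimately show ?thesis by auto
      next
        case False
        then have "x' p = x p" "x' q = x q" using pF by (auto simp: x'_def)
        then show ?thesis using g[of p q z] p q pq pF False by auto
      qed
    qed
  qed
  have C: "\<forall>i\<in>{i0..n}. (\<Sum>j=i..n. min (int m) \<lfloor>x' i - x' (j+1)\<rfloor>) = lam i"
  proof
    fix i assume i: "i \<in> {i0..n}"
    show "(\<Sum>j=i..n. min (int m) \<lfloor>x' i - x' (j+1)\<rfloor>) = lam i"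
    proof (cases "i = i0")
      case True
      have "(\<Sum>j=i..n. min (int m) \<lfloor>x' i - x' (j+1)\<rfloor>) = (\<Sum>j=i0..n. min (int m) \<lfloor>t - x (Suc j)\<rfloor>)"
        using True by (intro sum.cong) (auto simp: x'_def)
      also have "\<dots> = (\<Sum>p\<in>J. min (int m) \<lfloor>t - x p\<rfloor>)"
        unfolding JS by (simp only: sum.shift_bounds_cl_Suc_ivl)
      finally show ?thesis using ts True by simp
    next
      case False
      then have "i \<in> {n+1-r..n}" using i i0 by auto
      moreover have "(\<Sum>j=i..n. min (int m) \<lfloor>x' i - x' (j+1)\<rfloor>) = (\<Sum>j=i..n. min (int m) \<lfloor>x i - x (j+1)\<rfloor>)"
        using False i by (intro sum.cong) (auto simp: x'_def)
      ultimately show ?thesis using sm by simp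
    qed
  qed
  show ?case unfolding i0(3) using A B C by blast
qed

lemma exists_point:
  assumes lam: "lam \<in> partitions m n"
  shows "\<exists>x. x \<in> complement_arr m n \<and> (\<forall>i j. 1 \<le> i \<and> i \<le> j \<and> j \<le> n \<longrightarrow> pair_alpha x i j > 0)
             \<and> lamx m n x = lam"
proof -
  obtain x :: "nat \<Rightarrow> real" where
    dec: "\<forall>p\<in>{1..n+1}. \<forall>q\<in>{1..n+1}. p < q \<longrightarrow> x q < x p" and
    gen: "\<forall>p\<in>{1..n+1}. \<forall>q\<in>{1..n+1}. p \<noteq> q \<longrightarrow> (\<forall>z::int. x p - x q \<noteq> real_of_int z)" and
    sm: "\<forall>i\<in>{1..n}. (\<Sum>j=i..n. min (int m) \<lfloor>x i - x (j+1)\<rfloor>) = lam i"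
    using build[OF lam, of n] by auto
  define c where "c = (\<Sum>i=1..n+1. x i) / real (n+1)"
  define x' where "x' = (\<lambda>i. if i \<in> {1..n+1} then x i - c else 0)"
  have pa: "pair_alpha x' i j = x i - x (j+1)" if "1 \<le> i" "i \<le> j" "j \<le> n" for i j
    using that by (simp add: pair_alpha_def x'_def)
  have VA: "x' \<in> VA n"
  proof -
    have "(\<Sum>i=1..n+1. x' i) = (\<Sum>i=1..n+1. x i - c)" by (intro sum.cong) (auto simp: x'_def)
    also have "\<dots> = (\<Sum>i=1..n+1. x i) - real (n+1) * c" by (simp add: sum_subtractf)
    also have "\<dots> = 0" by (simp add: c_def)
    finally show ?thesis by (simp add: VA_def x'_def)
  qed
  have pos: "\<forall>i j. 1 \<le> i \<and> i \<le> j \<and> j \<le> n \<longrightarrow> pair_alpha x' i j > 0"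
  proof (intro allI impI)
    fix i j assume ij: "1 \<le> i \<and> i \<le> j \<and> j \<le> n"
    have "x (j+1) < x i" using dec ij by auto
    then show "pair_alpha x' i j > 0" using pa ij by simp
  qed
  have comp: "x' \<in> complement_arr m n"
  proof -
    have "x' \<notin> H" if hH: "H \<in> cat_arr m n" for H
    proof
      assume xH: "x' \<in> H"
      obtain i j k where H: "H = hyperplane_A n i j k" and ij: "1 \<le> i" "i \<le> j" "j \<le> n"
        using hH unfolding cat_arr_def by blast
      have "pair_alpha x' i j = real_of_int k" using xH H by (simp add: hyperplane_A_def)
      then have "x i - x (j+1) = real_of_int k" using pa ij by simp
      moreover have "x i - x (j+1) \<noteq> real_of_int k" using gen ij by auto
      ultimately show False by simp
    qed
    then show ?thesis using VA by (auto simp: complement_arr_def)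
  qed
  have "lamx m n x' = lam"
  proof
    fix i
    show "lamx m n x' i = lam i"
    proof (cases "i \<in> {1..n}")
      case True
      have "(\<Sum>j=i..n. tabx m n x' i j) = (\<Sum>j=i..n. min (int m) \<lfloor>x i - x (j+1)\<rfloor>)"
        using True by (intro sum.cong) (auto simp: tabx_def pa)
      then show ?thesis using True sm by (simp add: lamx_def)
    next
      case False
      have "lam i = 0" using lam False unfolding partitions_def by blast
      then show ?thesis using False unfolding lamx_def by auto
    qed
  qed
  then show ?thesis using comp pos by blast
qed

lemma tableau_eq:
  assumes x: "x \<in> complement_arr m n"
    and pos: "\<forall>i j. 1 \<le> i \<and> i \<le> j \<and> j \<le> n \<longrightarrow> pair_alpha x i j > 0"
  shows "phi_bar m n (lamx m n x) = shi_tableau m n (connected_component_set (complement_arr m n) x)"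
proof (intro ext)
  fix i j
  have w: "\<forall>i j. 1 \<le> i \<and> i \<le> j \<and> j \<le> n \<longrightarrow> pair_alpha x i j \<ge> 0" using pos by (auto intro: less_imp_le)
  have "phi_bar m n (lamx m n x) i j = tabx m n x i j" by (simp add: phi_bar_def phik_tabx[OF w])
  also have "\<dots> = shi_tableau m n (connected_component_set (complement_arr m n) x) i j"
  proof (cases "1 \<le> i \<and> i \<le> j \<and> j \<le> n")
    case True
    then show ?thesis using shi_k_eq[OF x, of i j] pos by (simp add: tabx_def shi_tableau_def)
  next
    case False
    then show ?thesis unfolding tabx_def shi_tableau_def by auto
  qed
  finally show "phi_bar m n (lamx m n x) i j = shi_tableau m n (connected_component_set (complement_arr m n) x) i j" .
qed

theorem lemma4p7:
  fixes n m :: nat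
  assumes "1 \<le> n" and "1 \<le> m"
  shows "phi_bar m n ` partitions m n = shi_tableau m n ` dominant_regions m n"
proof
  show "phi_bar m n ` partitions m n \<subseteq> shi_tableau m n ` dominant_regions m n"
  proof
    fix T assume "T \<in> phi_bar m n ` partitions m n"
    then obtain lam where lam: "lam \<in> partitions m n" and T: "T = phi_bar m n lam" by blast
    obtain x where x: "x \<in> complement_arr m n"
      and pos: "\<forall>i j. 1 \<le> i \<and> i \<le> j \<and> j \<le> n \<longrightarrow> pair_alpha x i j > 0"
      and lx: "lamx m n x = lam" using exists_point[OF lam] by blast
    let ?R = "connected_component_set (complement_arr m n) x"
    have "?R \<in> regions m n" using x unfolding regions_def by blast
    moreover have "?R \<subseteq> dominant_cone n"
    proof
      fix y assume y: "y \<in> ?R"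
      have "pair_alpha y i j \<ge> 0" if "1 \<le> i \<and> i \<le> j \<and> j \<le> n" for i j
        using alpha_same_side[OF x y, of i j 0] that pos by force
      then show "y \<in> dominant_cone n" by (simp add: dominant_cone_def)
    qed
    ultimately have "?R \<in> dominant_regions m n" by (simp add: dominant_regions_def)
    moreover have "T = shi_tableau m n ?R" using tableau_eq[OF x pos] T lx by simp
    ultimately show "T \<in> shi_tableau m n ` dominant_regions m n" by blast
  qed
next
  show "shi_tableau m n ` dominant_regions m n \<subseteq> phi_bar m n ` partitions m n"
  proof
    fix T assume "T \<in> shi_tableau m n ` dominant_regions m n"
    then obtain R where R: "R \<in> dominant_regions m n" and T: "T = shi_tableau m n R" by blast
    then obtain x where x: "x \<in> complement_arr m n" and Rx: "R = connected_component_set (complement_arr m n) x"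
      unfolding dominant_regions_def regions_def by blast
    have xR: "x \<in> R" using x Rx by (simp add: connected_component_refl)
    have dom: "R \<subseteq> dominant_cone n" using R by (simp add: dominant_regions_def)
    have pos: "\<forall>i j. 1 \<le> i \<and> i \<le> j \<and> j \<le> n \<longrightarrow> pair_alpha x i j > 0"
    proof (intro allI impI)
      fix i j assume ij: "1 \<le> i \<and> i \<le> j \<and> j \<le> n"
      have "pair_alpha x i j \<ge> 0" using dom xR ij by (auto simp: dominant_cone_def)
      moreover have "pair_alpha x i j \<noteq> real_of_int 0" using nohit_pt[OF x, of i j 0] ij by simp
      ultimately show "pair_alpha x i j > 0" by simp
    qed
    have w: "\<forall>i j. 1 \<le> i \<and> i \<le> j \<and> j \<le> n \<longrightarrow> pair_alpha x i j \<ge> 0" using pos by (auto intro: less_imp_le)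
    have "lamx m n x \<in> partitions m n" by (rule lamx_part[OF w])
    moreover have "T = phi_bar m n (lamx m n x)" using tableau_eq[OF x pos] T Rx by simp
    ultimately show "T \<in> phi_bar m n ` partitions m n" by blast
  qed
qed

end
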